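(* Let $R$ be a unital associative commutative ring such that $\frac16\in R$, and let $A$ be an associative $R$-algebra. Let $k>0$ be an integer and let $m_1,\dots,m_k$ be odd positive integers. Put $N_k=\sum_{i=1}^k m_i-k+1$. Then \[ T^{(m_1)}(A)\cdots T^{(m_k)}(A)\subseteq T^{(N_k)}(A). \]
   Context: For an associative algebra $A$, left-normed commutators are defined by $[a_1,a_2]=a_1a_2-a_2a_1$ and $[a_1,\dots,a_{n-1},a_n]=[[a_1,\dots,a_{n-1}],a_n]$ for $n\ge 3$. For $n\ge 2$, $T^{(n)}(A)$ denotes the two-sided ideal of $A$ generated by all commutators $[a_1,\dots,a_n]$ with $a_i\in A$, and $T^{(1)}(A)=A$. *)

theory Defs
  imports Main
begin

definition is_algebra :: "('r::comm_ring_1 \<Rightarrow> 'a::ring \<Rightarrow> 'a) \<Rightarrow> bool" where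
  "is_algebra smult \<longleftrightarrow>
     (\<forall>r s a. smult (r + s) a = smult r a + smult s a) \<and>
     (\<forall>r a b. smult r (a + b) = smult r a + smult r b) \<and>
     (\<forall>r s a. smult (r * s) a = smult r (smult s a)) \<and>
     (\<forall>a. smult 1 a = a) \<and>
     (\<forall>r a b. smult r (a * b) = smult r a * b) \<and>
     (\<forall>r a b. smult r (a * b) = a * smult r b)"

definition alg_ideal :: "('r::comm_ring_1 \<Rightarrow> 'a::ring \<Rightarrow> 'a) \<Rightarrow> 'a set \<Rightarrow> bool" where
  "alg_ideal smult I \<longleftrightarrow>
     0 \<in> I \<and> (\<forall>x\<in>I. \<forall>y\<in>I. x + y \<in> I) \<and> (\<forall>x\<in>I. - x \<in> I) \<and>
     (\<forall>r. \<forall>x\<in>I. smult r x \<in> I) \<and> (\<forall>a. \<forall>x\<in>I. a * x \<in> I \<and> x * a \<in> I)"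

definition ideal_gen :: "('r::comm_ring_1 \<Rightarrow> 'a::ring \<Rightarrow> 'a) \<Rightarrow> 'a set \<Rightarrow> 'a set" where
  "ideal_gen smult S = \<Inter>{I. alg_ideal smult I \<and> S \<subseteq> I}"

fun lcomm :: "'a::ring list \<Rightarrow> 'a" where
  "lcomm [] = 0"
| "lcomm (x # xs) = foldl (\<lambda>u v. u * v - v * u) x xs"

definition Tn :: "('r::comm_ring_1 \<Rightarrow> 'a::ring \<Rightarrow> 'a) \<Rightarrow> nat \<Rightarrow> 'a set" where
  "Tn smult n = (if n \<le> 1 then UNIV
                 else ideal_gen smult {lcomm xs | xs. length xs = n})"

text \<open>Product of a nonempty list of elements (no unit needed).\<close>
fun lprod :: "'a::ring list \<Rightarrow> 'a" where
  "lprod [] = 0"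
| "lprod (x # xs) = foldl (*) x xs"

definition submod :: "('r::comm_ring_1 \<Rightarrow> 'a::ring \<Rightarrow> 'a) \<Rightarrow> 'a set \<Rightarrow> bool" where
  "submod smult M \<longleftrightarrow>
     0 \<in> M \<and> (\<forall>x\<in>M. \<forall>y\<in>M. x + y \<in> M) \<and> (\<forall>x\<in>M. - x \<in> M) \<and>
     (\<forall>r. \<forall>x\<in>M. smult r x \<in> M)"

definition set_product :: "('r::comm_ring_1 \<Rightarrow> 'a::ring \<Rightarrow> 'a) \<Rightarrow> 'a set list \<Rightarrow> 'a set" where
  "set_product smult Is =
     \<Inter>{M. submod smult M \<and>
          {lprod xs | xs. length xs = length Is \<and> (\<forall>i<length Is. xs ! i \<in> Is ! i)} \<subseteq> M}"

end

theory Submission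
  imports Defs
begin

definition cm :: "'a::ring \<Rightarrow> 'a \<Rightarrow> 'a" where "cm u v = u*v - v*u"

lemma lcomm_snoc: "xs \<noteq> [] \<Longrightarrow> lcomm (xs @ [y]) = cm (lcomm xs) y"
  by (cases xs) (simp_all add: cm_def)

lemma lcomm_Cons2: "lcomm (x1 # x2 # rest) = lcomm (cm x1 x2 # rest)"
  by (simp add: cm_def)

lemma lprod_snoc: "xs \<noteq> [] \<Longrightarrow> lprod (xs @ [y]) = lprod xs * y"
  by (cases xs) simp_all

locale algctx =
  fixes smult :: "'r::comm_ring_1 \<Rightarrow> 'a::ring \<Rightarrow> 'a"
  assumes alg: "is_algebra smult"
  and six: "\<exists>u::'r. 6 * u = 1"
begin

lemma sm_add_left: "smult (r + s) a = smult r a + smult s a"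
  using conjunct1[OF alg[unfolded is_algebra_def]] by simp
lemma sm_add: "smult r (a + b) = smult r a + smult r b"
  using conjunct1[OF conjunct2[OF alg[unfolded is_algebra_def]]] by simp
lemma sm_mult_scal: "smult (r * s) a = smult r (smult s a)"
  using conjunct1[OF conjunct2[OF conjunct2[OF alg[unfolded is_algebra_def]]]] by simp
lemma sm_one: "smult 1 a = a"
  using conjunct1[OF conjunct2[OF conjunct2[OF conjunct2[OF alg[unfolded is_algebra_def]]]]] by simp
lemma sm_m1: "smult r (a * b) = smult r a * b"
  using conjunct1[OF conjunct2[OF conjunct2[OF conjunct2[OF conjunct2[OF alg[unfolded is_algebra_def]]]]]] by simp
lemma sm_m2: "smult r (a * b) = a * smult r b"
  using conjunct2[OF conjunct2[OF conjunct2[OF conjunct2[OF conjunct2[OF alg[unfolded is_algebra_def]]]]]] by simp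
lemma sm_zero: "smult r 0 = 0"
proof -
  have "smult r (0 + 0) = smult r 0 + smult r 0" by (rule sm_add)
  then show ?thesis by simp
qed
lemma sm_neg: "smult r (- a) = - smult r a"
proof -
  have "smult r (a + - a) = smult r a + smult r (- a)" by (rule sm_add)
  then have "0 = smult r a + smult r (- a)" by (simp add: sm_zero)
  then show ?thesis by (simp add: eq_neg_iff_add_eq_0 add.commute)
qed
lemma sm_diff: "smult r (a - b) = smult r a - smult r b"
  using sm_add[of r a "- b"] sm_neg[of r b] by simp
lemma sm_cm1: "smult r (cm u v) = cm (smult r u) v"
  using sm_m1[of r u v] sm_m2[of r v u] by (simp add: cm_def sm_diff)
lemma sm_cm2: "smult r (cm u v) = cm u (smult r v)"
  using sm_m2[of r u v] sm_m1[of r v u] by (simp add: cm_def sm_diff)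

inductive_set LL :: "nat \<Rightarrow> 'a set" for n where
  gen: "length xs = n \<Longrightarrow> lcomm xs \<in> LL n"
| zero: "0 \<in> LL n"
| add: "u \<in> LL n \<Longrightarrow> v \<in> LL n \<Longrightarrow> u + v \<in> LL n"
| neg: "u \<in> LL n \<Longrightarrow> - u \<in> LL n"
| sm: "u \<in> LL n \<Longrightarrow> smult r u \<in> LL n"

lemma LL_diff: "u \<in> LL n \<Longrightarrow> v \<in> LL n \<Longrightarrow> u - v \<in> LL n"
  unfolding diff_conv_add_uminus by (rule LL.add, assumption, rule LL.neg)

lemma LL1: "x \<in> LL 1"
  using LL.gen[of "[x]" 1] by simp

lemma LL_right: "u \<in> LL n \<Longrightarrow> 1 \<le> n \<Longrightarrow> cm u y \<in> LL (Suc n)"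
proof (induction rule: LL.induct)
  case (gen xs)
  then have "xs \<noteq> []" by auto
  then have "lcomm (xs @ [y]) = cm (lcomm xs) y" by (rule lcomm_snoc)
  moreover have "lcomm (xs @ [y]) \<in> LL (Suc n)" by (rule LL.gen) (simp add: gen)
  ultimately show ?case by simp
next
  case zero then show ?case by (simp add: cm_def LL.zero)
next
  case (add u v)
  have "cm (u + v) y = cm u y + cm v y" by (simp add: cm_def algebra_simps)
  then show ?case using add by (simp add: LL.add)
next
  case (neg u)
  have "cm (- u) y = - cm u y" by (simp add: cm_def algebra_simps)
  then show ?case using neg by (simp add: LL.neg)
next
  case (sm u r)
  then show ?case by (simp add: sm_cm1[symmetric] LL.sm)
qed

lemma LL_Suc: "u \<in> LL (Suc n) \<Longrightarrow> 1 \<le> n \<Longrightarrow> u \<in> LL n"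
proof (induction rule: LL.induct)
  case (gen xs)
  then obtain x1 xs1 where xs1: "xs = x1 # xs1" by (cases xs) auto
  then obtain x2 rest where "xs1 = x2 # rest" using gen by (cases xs1) auto
  then have xs: "xs = x1 # x2 # rest" using xs1 by simp
  have "lcomm xs = lcomm (cm x1 x2 # rest)" unfolding xs by (rule lcomm_Cons2)
  moreover have "lcomm (cm x1 x2 # rest) \<in> LL n" by (rule LL.gen) (use gen xs in simp)
  ultimately show ?case by simp
qed (auto intro: LL.intros)

lemma LL_le: "u \<in> LL n \<Longrightarrow> 1 \<le> m \<Longrightarrow> m \<le> n \<Longrightarrow> u \<in> LL m"
proof -
  assume u: "u \<in> LL n" and m1: "1 \<le> m" and mn: "m \<le> n"
  have "\<forall>u. u \<in> LL n \<longrightarrow> u \<in> LL m" using mn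
  proof (induction n rule: dec_induct)
    case base then show ?case by simp
  next
    case (step k)
    show ?case
    proof (intro allI impI)
      fix v assume "v \<in> LL (Suc k)"
      then have "v \<in> LL k" using LL_Suc m1 step.hyps(1) by simp
      then show "v \<in> LL m" using step.IH by simp
    qed
  qed
  then show ?thesis using u by simp
qed

lemma comm_LL: "u \<in> LL a \<Longrightarrow> v \<in> LL b \<Longrightarrow> 1 \<le> a \<Longrightarrow> 1 \<le> b \<Longrightarrow> cm u v \<in> LL (a + b)"
proof (induction b arbitrary: a u v rule: less_induct)
  case (less b)
  from less.prems(2) show ?case
  proof (induction rule: LL.induct)
    case (gen xs)
    show ?case
    proof (cases "b = 1")
      case True
      then obtain y where "xs = [y]" using gen by (cases xs) auto
      then have "lcomm xs = y" by simp
      then show ?thesis using LL_right[OF less.prems(1) less.prems(3), of y] True by simp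
    next
      case False
      then have b2: "b \<ge> 2" using less.prems(4) by simp
      have "xs \<noteq> []" using gen b2 by auto
      then obtain ys y where xs: "xs = ys @ [y]" using rev_exhaust by blast
      have lys: "length ys = b - 1" using xs gen by simp
      then have ysne: "ys \<noteq> []" using b2 by auto
      define v' where "v' = lcomm ys"
      have v': "v' \<in> LL (b - 1)" unfolding v'_def by (rule LL.gen) (rule lys)
      have lx: "lcomm xs = cm v' y" unfolding xs v'_def by (rule lcomm_snoc[OF ysne])
      have jac: "cm u (cm v' y) = cm (cm u v') y - cm (cm u y) v'"
        by (simp add: cm_def algebra_simps)
      have h1: "cm u v' \<in> LL (a + (b - 1))"
        by (rule less.IH[of "b - 1" u a v']) (use less.prems v' b2 in auto)
      have e1: "Suc (a + (b - 1)) = a + b" using b2 by simp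
      have h1': "cm (cm u v') y \<in> LL (a + b)"
        using LL_right[OF h1, of y] less.prems(3) unfolding e1 by simp
      have h2: "cm u y \<in> LL (Suc a)" using LL_right[OF less.prems(1) less.prems(3)] .
      have h2': "cm (cm u y) v' \<in> LL (Suc a + (b - 1))"
        by (rule less.IH[of "b - 1" "cm u y" "Suc a" v']) (use h2 v' b2 in auto)
      have e: "Suc a + (b - 1) = a + b" using b2 by simp
      have h2'': "cm (cm u y) v' \<in> LL (a + b)" using h2' unfolding e .
      have "cm (cm u v') y - cm (cm u y) v' \<in> LL (a + b)" by (rule LL_diff[OF h1' h2''])
      then show ?thesis unfolding lx jac .
    qed
  next
    case zero then show ?case by (simp add: cm_def LL.zero)
  next
    case (add v1 v2)
    have "cm u (v1 + v2) = cm u v1 + cm u v2" by (simp add: cm_def algebra_simps)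
    then show ?case using add by (simp add: LL.add)
  next
    case (neg v)
    have "cm u (- v) = - cm u v" by (simp add: cm_def algebra_simps)
    then show ?case using neg by (simp add: LL.neg)
  next
    case (sm v r)
    then show ?case by (simp add: sm_cm2[symmetric] LL.sm)
  qed
qed


abbreviation T :: "nat \<Rightarrow> 'a set" where "T n \<equiv> Tn smult n"

lemma ideal_gen_ideal: "alg_ideal smult (ideal_gen smult S)"
  unfolding alg_ideal_def ideal_gen_def by blast

lemma ideal_gen_sub: "S \<subseteq> ideal_gen smult S"
  unfolding ideal_gen_def by blast

lemma ideal_gen_least: "alg_ideal smult I \<Longrightarrow> S \<subseteq> I \<Longrightarrow> ideal_gen smult S \<subseteq> I"
  unfolding ideal_gen_def by blast

lemma UNIV_ideal: "alg_ideal smult UNIV"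
  unfolding alg_ideal_def by blast

lemma T_ideal: "alg_ideal smult (T n)"
  unfolding Tn_def using UNIV_ideal ideal_gen_ideal by simp

lemma T_zero: "0 \<in> T n" using T_ideal[of n] unfolding alg_ideal_def by blast
lemma T_add: "u \<in> T n \<Longrightarrow> v \<in> T n \<Longrightarrow> u + v \<in> T n"
  using T_ideal[of n] unfolding alg_ideal_def by blast
lemma T_neg: "u \<in> T n \<Longrightarrow> - u \<in> T n"
  using T_ideal[of n] unfolding alg_ideal_def by blast
lemma T_diff: "u \<in> T n \<Longrightarrow> v \<in> T n \<Longrightarrow> u - v \<in> T n"
  unfolding diff_conv_add_uminus by (rule T_add, assumption, rule T_neg)
lemma T_sm: "u \<in> T n \<Longrightarrow> smult r u \<in> T n"
  using T_ideal[of n] unfolding alg_ideal_def by blast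
lemma T_mult_left: "u \<in> T n \<Longrightarrow> a * u \<in> T n"
  using T_ideal[of n] unfolding alg_ideal_def by blast
lemma T_mult_right: "u \<in> T n \<Longrightarrow> u * a \<in> T n"
  using T_ideal[of n] unfolding alg_ideal_def by blast

lemma T_low: "n \<le> 1 \<Longrightarrow> T n = UNIV"
  unfolding Tn_def by simp

lemma LL_T: "u \<in> LL n \<Longrightarrow> 1 \<le> n \<Longrightarrow> u \<in> T n"
proof (induction rule: LL.induct)
  case (gen xs)
  show ?case
  proof (cases "n \<le> 1")
    case True then show ?thesis using T_low by simp
  next
    case False
    then have e: "T n = ideal_gen smult {lcomm xs | xs. length xs = n}" unfolding Tn_def by simp
    have "lcomm xs \<in> {lcomm xs | xs. length xs = n}"
      by (rule CollectI, rule exI[where x=xs], rule conjI[OF refl gen(1)])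
    then have "lcomm xs \<in> ideal_gen smult {lcomm xs | xs. length xs = n}"
      by (rule subsetD[OF ideal_gen_sub])
    then show ?thesis unfolding e .
  qed
qed (auto intro: T_zero T_add T_neg T_sm)

lemma LL_T_ge: "u \<in> LL w \<Longrightarrow> k \<le> w \<Longrightarrow> 1 \<le> k \<Longrightarrow> u \<in> T k"
  using LL_le LL_T by blast

lemma T_Suc: "z \<in> T (Suc n) \<Longrightarrow> z \<in> T n"
proof (cases "n = 0")
  case True then show "z \<in> T n" using T_low by simp
next
  case False
  assume z: "z \<in> T (Suc n)"
  have e: "T (Suc n) = ideal_gen smult {lcomm xs | xs. length xs = Suc n}"
    unfolding Tn_def using False by simp
  have sub: "{lcomm xs | xs. length xs = Suc n} \<subseteq> T n"
  proof
    fix u :: 'a assume "u \<in> {lcomm xs | xs. length xs = Suc n}"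
    then obtain xs where "u = lcomm xs" "length xs = Suc n" by blast
    then have "u \<in> LL (Suc n)" using LL.gen[of xs "Suc n"] by simp
    then have "u \<in> LL n" using LL_Suc False by simp
    then show "u \<in> T n" using LL_T False by simp
  qed
  have "ideal_gen smult {lcomm xs | xs. length xs = Suc n} \<subseteq> T n" by (rule ideal_gen_least[OF T_ideal sub])
  then have "T (Suc n) \<subseteq> T n" unfolding e .
  then show "z \<in> T n" using z by blast
qed

lemma T_le: "z \<in> T n \<Longrightarrow> m \<le> n \<Longrightarrow> z \<in> T m"
proof -
  assume z: "z \<in> T n" and mn: "m \<le> n"
  have "\<forall>z. z \<in> T n \<longrightarrow> z \<in> T m" using mn
  proof (induction n rule: dec_induct)
    case base then show ?case by simp
  next
    case (step k) then show ?case using T_Suc by blast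
  qed
  then show ?thesis using z by simp
qed

inductive_set TT :: "nat \<Rightarrow> 'a set" for n where
  g1: "c \<in> LL n \<Longrightarrow> c \<in> TT n"
| g2: "c \<in> LL n \<Longrightarrow> x * c \<in> TT n"
| add: "u \<in> TT n \<Longrightarrow> v \<in> TT n \<Longrightarrow> u + v \<in> TT n"

lemma TT_neg: "u \<in> TT n \<Longrightarrow> - u \<in> TT n"
proof (induction rule: TT.induct)
  case (g1 c) then show ?case by (simp add: LL.neg TT.g1)
next
  case (g2 c x)
  have e: "- (x * c) = (- x) * c" by simp
  show ?case unfolding e by (rule TT.g2[OF g2])
next
  case (add u v)
  have e: "- (u + v) = (- u) + (- v)" by simp
  show ?case unfolding e by (rule TT.add[OF add.IH(1) add.IH(2)])
qed

lemma TT_sm: "u \<in> TT n \<Longrightarrow> smult r u \<in> TT n"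
proof (induction rule: TT.induct)
  case (g1 c) then show ?case by (simp add: LL.sm TT.g1)
next
  case (g2 c x)
  have e: "smult r (x * c) = smult r x * c" by (rule sm_m1)
  show ?case unfolding e by (rule TT.g2[OF g2])
next
  case (add u v) then show ?case by (simp add: TT.add sm_add)
qed

lemma TT_left: "u \<in> TT n \<Longrightarrow> a * u \<in> TT n"
proof (induction rule: TT.induct)
  case (g1 c) then show ?case by (simp add: TT.g2)
next
  case (g2 c x)
  have e: "a * (x * c) = (a * x) * c" by (simp add: mult.assoc)
  show ?case unfolding e by (rule TT.g2[OF g2])
next
  case (add u v) then show ?case by (simp add: TT.add distrib_left)
qed

lemma TT_right: "u \<in> TT n \<Longrightarrow> 1 \<le> n \<Longrightarrow> u * a \<in> TT n"
proof (induction rule: TT.induct)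
  case (g1 c)
  have e: "c * a = a * c + cm c a" by (simp add: cm_def)
  have "cm c a \<in> LL n" using LL_Suc[OF LL_right[OF g1(1) g1(2)]] g1(2) .
  then show ?case unfolding e using g1 by (intro TT.add TT.g2 TT.g1)
next
  case (g2 c x)
  have e: "x * c * a = (x * a) * c + x * cm c a" by (simp add: cm_def algebra_simps)
  have "cm c a \<in> LL n" using LL_Suc[OF LL_right[OF g2(1) g2(2)]] g2(2) .
  then show ?case unfolding e using g2 by (intro TT.add TT.g2)
next
  case (add u v) then show ?case by (simp add: TT.add distrib_right)
qed

lemma TT_ideal: assumes n1: "1 \<le> n" shows "alg_ideal smult (TT n)"
  unfolding alg_ideal_def
proof (intro conjI ballI allI)
  show "0 \<in> TT n" by (rule TT.g1[OF LL.zero])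
next
  fix x y assume "x \<in> TT n" "y \<in> TT n" then show "x + y \<in> TT n" by (rule TT.add)
next
  fix x assume "x \<in> TT n" then show "- x \<in> TT n" by (rule TT_neg)
next
  fix r x assume "x \<in> TT n" then show "smult r x \<in> TT n" by (rule TT_sm)
next
  fix a x assume "x \<in> TT n" then show "a * x \<in> TT n" by (rule TT_left)
next
  fix a x assume "x \<in> TT n" then show "x * a \<in> TT n" by (rule TT_right[OF _ n1])
qed

lemma T_TT: "z \<in> T n \<Longrightarrow> 1 \<le> n \<Longrightarrow> z \<in> TT n"
proof (cases "n \<le> 1")
  case True
  assume "1 \<le> n"
  then have n1: "n = 1" using True by simp
  show "z \<in> TT n" unfolding n1 by (rule TT.g1[OF LL1])
next
  case False
  assume z: "z \<in> T n" and n1: "1 \<le> n"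
  have e: "T n = ideal_gen smult {lcomm xs | xs. length xs = n}" unfolding Tn_def using False by simp
  have sub: "{lcomm xs | xs. length xs = n} \<subseteq> TT n"
  proof
    fix u :: 'a assume "u \<in> {lcomm xs | xs. length xs = n}"
    then obtain xs where "u = lcomm xs" "length xs = n" by blast
    then show "u \<in> TT n" using LL.gen[of xs n] TT.g1 by simp
  qed
  have "ideal_gen smult {lcomm xs | xs. length xs = n} \<subseteq> TT n" by (rule ideal_gen_least[OF TT_ideal[OF n1] sub])
  then have "T n \<subseteq> TT n" unfolding e .
  then show "z \<in> TT n" using z by blast
qed

lemma T_induct[consumes 2, case_names g1 g2 add]:
  assumes "z \<in> T n" "1 \<le> n"
    and "\<And>c. c \<in> LL n \<Longrightarrow> P c"
    and "\<And>x c. c \<in> LL n \<Longrightarrow> P (x * c)"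
    and "\<And>u v. P u \<Longrightarrow> P v \<Longrightarrow> P (u + v)"
  shows "P z"
  using T_TT[OF assms(1,2)] by (induction rule: TT.induct) (use assms in auto)

lemma third: "t + t + t \<in> T k \<Longrightarrow> t \<in> T k"
proof -
  assume h: "t + t + t \<in> T k"
  obtain u :: 'r where u: "6 * u = 1" using six by blast
  have "smult 3 t = t + t + t"
    using sm_add_left[of 1 1 t] sm_add_left[of 2 1 t] sm_one[of t]
    by (simp add: numeral_eq_Suc)
  then have "smult (2 * u) (smult 3 t) \<in> T k" using T_sm h by simp
  moreover have "(2 * u) * 3 = (1::'r)" using u by (simp add: algebra_simps)
  ultimately show "t \<in> T k" using sm_mult_scal[of "2*u" 3 t] sm_one[of t] by simp
qed


lemma len3: "length xs = 3 \<Longrightarrow> \<exists>a b c. xs = [a, b, c]"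
  by (auto simp: numeral_3_eq_3 length_Suc_conv)

lemma lcomm3: "lcomm [a, b, c] = cm (cm a b) c" by (simp add: cm_def)

lemma lcomm_last: "length ys = Suc n \<Longrightarrow> 1 \<le> n \<Longrightarrow> \<exists>ys' y. lcomm ys = cm (lcomm ys') y \<and> length ys' = n"
proof -
  assume l: "length ys = Suc n" and n: "1 \<le> n"
  then have "ys \<noteq> []" by auto
  then obtain ys' y where ys: "ys = ys' @ [y]" using rev_exhaust by blast
  have len: "length ys' = n" using l ys by simp
  then have ne: "ys' \<noteq> []" using n by auto
  have "lcomm ys = cm (lcomm ys') y" unfolding ys by (rule lcomm_snoc[OF ne])
  then show ?thesis using len by blast
qed

lemma lin_left: "(\<And>xs. length xs = k \<Longrightarrow> lcomm xs * d \<in> T N) \<Longrightarrow> c \<in> LL k \<Longrightarrow> c * d \<in> T N"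
proof -
  assume H: "\<And>xs. length xs = k \<Longrightarrow> lcomm xs * d \<in> T N"
  assume "c \<in> LL k" then show "c * d \<in> T N"
  proof (induction rule: LL.induct)
    case (gen xs) then show ?case by (rule H)
  next
    case zero then show ?case by (simp add: T_zero)
  next
    case (add u v)
    have e: "(u + v) * d = u * d + v * d" by (simp add: distrib_right)
    show ?case unfolding e by (rule T_add[OF add.IH])
  next
    case (neg u)
    have e: "(- u) * d = - (u * d)" by simp
    show ?case unfolding e by (rule T_neg[OF neg.IH])
  next
    case (sm u r)
    have e: "smult r u * d = smult r (u * d)" by (simp add: sm_m1)
    show ?case unfolding e by (rule T_sm[OF sm.IH])
  qed
qed

lemma lin_right: "(\<And>ys. length ys = n \<Longrightarrow> c * lcomm ys \<in> T N) \<Longrightarrow> d \<in> LL n \<Longrightarrow> c * d \<in> T N"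
proof -
  assume H: "\<And>ys. length ys = n \<Longrightarrow> c * lcomm ys \<in> T N"
  assume "d \<in> LL n" then show "c * d \<in> T N"
  proof (induction rule: LL.induct)
    case (gen xs) then show ?case by (rule H)
  next
    case zero then show ?case by (simp add: T_zero)
  next
    case (add u v)
    have e: "c * (u + v) = c * u + c * v" by (simp add: distrib_left)
    show ?case unfolding e by (rule T_add[OF add.IH])
  next
    case (neg u)
    have e: "c * (- u) = - (c * u)" by simp
    show ?case unfolding e by (rule T_neg[OF neg.IH])
  next
    case (sm u r)
    have e: "c * smult r u = smult r (c * u)" by (simp add: sm_m2)
    show ?case unfolding e by (rule T_sm[OF sm.IH])
  qed
qed


lemma p3id: "(cm (cm a b) c * cm x y) + (cm (cm a b) c * cm x y) + (cm (cm a b) c * cm x y) = - ((cm (cm (cm (a) (x)) (c)) (y)) * b) - ((cm (cm (cm (a) (x)) (c)) (y)) * b) - ((cm (cm (cm (a) (y)) (b)) (x)) * c) - (y * (cm (cm (cm (a) (b)) (x)) (c))) - (y * (cm (cm (cm (a) (b)) (x)) (c))) + ((cm (cm (cm (b) (x)) (y)) (c)) * a) - ((cm (cm (cm (b) ((a * c))) (x)) (y))) - ((cm (cm (cm (a) (b)) (x)) (y)) * c) - (a * (cm (cm (cm (b) (x)) (c)) (y))) - (a * (cm (cm (cm (b) (x)) (c)) (y))) - ((cm (cm (cm (a) (y)) (c)) (x)) * b) - ((cm (cm (cm (a) (y)) (c)) (x)) * b) + ((cm (cm (cm (b) (x)) (c)) (y)) * a) + ((cm (cm (cm (b) (x)) (c))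 (y)) * a) + ((cm (cm (cm (b) (c)) ((a * y))) (x))) + (b * (cm (cm (cm (a) (c)) (y)) (x))) + (b * (cm (cm (cm (a) (y)) (c)) (x))) - (c * (cm (cm (cm (a) (b)) (x)) (y))) + (y * (cm (cm (cm (a) (c)) (b)) (x))) - ((cm (cm (cm (a) (x)) (b)) (c)) * y) - (c * (cm (cm (cm (a) (x)) (y)) (b))) - (c * (cm (cm (cm (a) (x)) (y)) (b))) - ((cm (cm (cm (a) (x)) (b)) (y)) * c) + ((cm (cm (cm (b) (y)) (c)) (x)) * a) + ((cm (cm (cm (b) (y)) (c)) (x)) * a) + ((cm (cm (cm (b) ((a * y))) (x)) (c))) + ((cm (cm (cm (a) ((b * c))) (x)) (y))) - (b * (cm (cm (cm (a) (y)) (x)) (c))) - ((cm (cm (cm (a) ((c * y))) (b)) (x))) + (a * (cm (cm (cm (b) (c)) (x)) (y))) + (a * (cm (cm (cm (b) (c)) (x)) (y))) - (b * (cm (cm (cm (a) (c)) (x)) (y))) - (b * (cm (cm (cm (a) (c)) (x)) (y))) + (c * (cm (cm (cm (a) (y)) (b)) (x))) + (c * (cm (cm (cm (a) (y)) (b)) (x))) - ((cm (cm (cm (b) (y)) (x)) (c)) * a) - ((cm (cm (cm (b) (y)) (x)) (c)) * a) - (a * (cm (cm (cm (b) (y)) (c)) (x))) + (a * (cm (cm (cm (b) (x)) (y)) (c))) - (b * (cm (cm (cm (a) (x)) (y)) (c))) - ((cm (cm (cm (a) (c)) ((b * y))) (x))) - ((cm (cm (cm (b) (x)) ((a * y)))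 (c))) - ((cm (cm (cm (b) (x)) ((a * y))) (c))) + ((cm (cm (cm (a) (c)) (x)) (y)) * b) + ((cm (cm (cm (a) (x)) ((c * y))) (b))) - (c * (cm (cm (cm (a) (y)) (x)) (b))) - (c * (cm (cm (cm (a) (y)) (x)) (b))) + ((cm (cm (cm (a) (x)) (y)) (b)) * c) + ((cm (cm (cm (a) ((b * y))) (c)) (x))) + (y * (cm (cm (cm (a) (b)) (c)) (x))) + (b * (cm (cm (cm (a) (x)) (c)) (y))) + (b * (cm (cm (cm (a) (x)) (c)) (y))) + ((cm (cm (cm (a) ((c * y))) (x)) (b))) + ((cm (cm (cm (a) (b)) (x)) (c)) * y) + ((cm (cm (cm (a) (b)) (x)) (c)) * y) - ((cm (cm (cm (a) ((b * y))) (x)) (c))) + (y * (cm (cm (cm (a) (x)) (b)) (c))) + ((cm (cm (cm (a) (y)) (x)) (b)) * c) + ((cm (cm (cm (a) (y)) (x)) (c)) * b) + ((cm (cm (cm (a) (y)) (x)) (c)) * b) - ((cm (cm (cm (a) (b)) ((c * y))) (x))) - ((cm (cm (cm (a) (b)) ((c * y))) (x))) - (a * (cm (cm (cm (b) (c)) (y)) (x))) - ((cm (cm (cm (a) (x)) (y)) (c)) * b) - ((cm (cm (cm (b) (c)) (x)) (y)) * a) - (y * (cm (cm (cm (a) (x)) (c)) (b))) + (c * (cm (cm (cm (a) (x)) (b)) (y))) - (y * (cm (cm (cm (a) (c)) (x)) (b))) + ((cm (cm (cm (a) (x)) ((b * y))) (c))) + ((cm (cm (cm (a) (x)) ((b *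 y))) (c))) - ((cm (cm (cm (b) ((a * y))) (c)) (x))) + (a * (cm (cm (cm (b) (y)) (x)) (c))) + (c * (cm (cm (cm (a) (b)) (y)) (x))) + (c * (cm (cm (cm (a) (b)) (y)) (x)))"
  unfolding cm_def by (simp add: algebra_simps)

lemma P3: assumes hx: "x \<in> LL m" and hm: "1 \<le> m" shows "cm (cm a b) c * cm x y \<in> T (m + 3)"
proof -
  have g0_l: "cm (cm (cm (a) (x)) (c)) (y) \<in> LL (1 + m + 1 + 1)" by (intro comm_LL LL1 hx) (use hm in simp_all)
  have g0: "(cm (cm (cm (a) (x)) (c)) (y)) * b \<in> T (m + 3)" by (rule T_mult_right, rule LL_T_ge[OF g0_l]) (use hm in simp_all)
  have g1_l: "cm (cm (cm (a) (y)) (b)) (x) \<in> LL (1 + 1 + 1 + m)" by (intro comm_LL LL1 hx) (use hm in simp_all)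
  have g1: "(cm (cm (cm (a) (y)) (b)) (x)) * c \<in> T (m + 3)" by (rule T_mult_right, rule LL_T_ge[OF g1_l]) (use hm in simp_all)
  have g2_l: "cm (cm (cm (a) (b)) (x)) (c) \<in> LL (1 + 1 + m + 1)" by (intro comm_LL LL1 hx) (use hm in simp_all)
  have g2: "y * (cm (cm (cm (a) (b)) (x)) (c)) \<in> T (m + 3)" by (rule T_mult_left, rule LL_T_ge[OF g2_l]) (use hm in simp_all)
  have g3_l: "cm (cm (cm (b) (x)) (y)) (c) \<in> LL (1 + m + 1 + 1)" by (intro comm_LL LL1 hx) (use hm in simp_all)
  have g3: "(cm (cm (cm (b) (x)) (y)) (c)) * a \<in> T (m + 3)" by (rule T_mult_right, rule LL_T_ge[OF g3_l]) (use hm in simp_all)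
  have g4_l: "cm (cm (cm (b) ((a * c))) (x)) (y) \<in> LL (1 + 1 + m + 1)" by (intro comm_LL LL1 hx) (use hm in simp_all)
  have g4: "(cm (cm (cm (b) ((a * c))) (x)) (y)) \<in> T (m + 3)" by (rule LL_T_ge[OF g4_l]) (use hm in simp_all)
  have g5_l: "cm (cm (cm (a) (b)) (x)) (y) \<in> LL (1 + 1 + m + 1)" by (intro comm_LL LL1 hx) (use hm in simp_all)
  have g5: "(cm (cm (cm (a) (b)) (x)) (y)) * c \<in> T (m + 3)" by (rule T_mult_right, rule LL_T_ge[OF g5_l]) (use hm in simp_all)
  have g6_l: "cm (cm (cm (b) (x)) (c)) (y) \<in> LL (1 + m + 1 + 1)" by (intro comm_LL LL1 hx) (use hm in simp_all)
  have g6: "a * (cm (cm (cm (b) (x)) (c)) (y)) \<in> T (m + 3)" by (rule T_mult_left, rule LL_T_ge[OF g6_l]) (use hm in simp_all)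
  have g7_l: "cm (cm (cm (a) (y)) (c)) (x) \<in> LL (1 + 1 + 1 + m)" by (intro comm_LL LL1 hx) (use hm in simp_all)
  have g7: "(cm (cm (cm (a) (y)) (c)) (x)) * b \<in> T (m + 3)" by (rule T_mult_right, rule LL_T_ge[OF g7_l]) (use hm in simp_all)
  have g8_l: "cm (cm (cm (b) (x)) (c)) (y) \<in> LL (1 + m + 1 + 1)" by (intro comm_LL LL1 hx) (use hm in simp_all)
  have g8: "(cm (cm (cm (b) (x)) (c)) (y)) * a \<in> T (m + 3)" by (rule T_mult_right, rule LL_T_ge[OF g8_l]) (use hm in simp_all)
  have g9_l: "cm (cm (cm (b) (c)) ((a * y))) (x) \<in> LL (1 + 1 + 1 + m)" by (intro comm_LL LL1 hx) (use hm in simp_all)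
  have g9: "(cm (cm (cm (b) (c)) ((a * y))) (x)) \<in> T (m + 3)" by (rule LL_T_ge[OF g9_l]) (use hm in simp_all)
  have g10_l: "cm (cm (cm (a) (c)) (y)) (x) \<in> LL (1 + 1 + 1 + m)" by (intro comm_LL LL1 hx) (use hm in simp_all)
  have g10: "b * (cm (cm (cm (a) (c)) (y)) (x)) \<in> T (m + 3)" by (rule T_mult_left, rule LL_T_ge[OF g10_l]) (use hm in simp_all)
  have g11_l: "cm (cm (cm (a) (y)) (c)) (x) \<in> LL (1 + 1 + 1 + m)" by (intro comm_LL LL1 hx) (use hm in simp_all)
  have g11: "b * (cm (cm (cm (a) (y)) (c)) (x)) \<in> T (m + 3)" by (rule T_mult_left, rule LL_T_ge[OF g11_l]) (use hm in simp_all)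
  have g12_l: "cm (cm (cm (a) (b)) (x)) (y) \<in> LL (1 + 1 + m + 1)" by (intro comm_LL LL1 hx) (use hm in simp_all)
  have g12: "c * (cm (cm (cm (a) (b)) (x)) (y)) \<in> T (m + 3)" by (rule T_mult_left, rule LL_T_ge[OF g12_l]) (use hm in simp_all)
  have g13_l: "cm (cm (cm (a) (c)) (b)) (x) \<in> LL (1 + 1 + 1 + m)" by (intro comm_LL LL1 hx) (use hm in simp_all)
  have g13: "y * (cm (cm (cm (a) (c)) (b)) (x)) \<in> T (m + 3)" by (rule T_mult_left, rule LL_T_ge[OF g13_l]) (use hm in simp_all)
  have g14_l: "cm (cm (cm (a) (x)) (b)) (c) \<in> LL (1 + m + 1 + 1)" by (intro comm_LL LL1 hx) (use hm in simp_all)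
  have g14: "(cm (cm (cm (a) (x)) (b)) (c)) * y \<in> T (m + 3)" by (rule T_mult_right, rule LL_T_ge[OF g14_l]) (use hm in simp_all)
  have g15_l: "cm (cm (cm (a) (x)) (y)) (b) \<in> LL (1 + m + 1 + 1)" by (intro comm_LL LL1 hx) (use hm in simp_all)
  have g15: "c * (cm (cm (cm (a) (x)) (y)) (b)) \<in> T (m + 3)" by (rule T_mult_left, rule LL_T_ge[OF g15_l]) (use hm in simp_all)
  have g16_l: "cm (cm (cm (a) (x)) (b)) (y) \<in> LL (1 + m + 1 + 1)" by (intro comm_LL LL1 hx) (use hm in simp_all)
  have g16: "(cm (cm (cm (a) (x)) (b)) (y)) * c \<in> T (m + 3)" by (rule T_mult_right, rule LL_T_ge[OF g16_l]) (use hm in simp_all)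
  have g17_l: "cm (cm (cm (b) (y)) (c)) (x) \<in> LL (1 + 1 + 1 + m)" by (intro comm_LL LL1 hx) (use hm in simp_all)
  have g17: "(cm (cm (cm (b) (y)) (c)) (x)) * a \<in> T (m + 3)" by (rule T_mult_right, rule LL_T_ge[OF g17_l]) (use hm in simp_all)
  have g18_l: "cm (cm (cm (b) ((a * y))) (x)) (c) \<in> LL (1 + 1 + m + 1)" by (intro comm_LL LL1 hx) (use hm in simp_all)
  have g18: "(cm (cm (cm (b) ((a * y))) (x)) (c)) \<in> T (m + 3)" by (rule LL_T_ge[OF g18_l]) (use hm in simp_all)
  have g19_l: "cm (cm (cm (a) ((b * c))) (x)) (y) \<in> LL (1 + 1 + m + 1)" by (intro comm_LL LL1 hx) (use hm in simp_all)
  have g19: "(cm (cm (cm (a) ((b * c))) (x)) (y)) \<in> T (m + 3)" by (rule LL_T_ge[OF g19_l]) (use hm in simp_all)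
  have g20_l: "cm (cm (cm (a) (y)) (x)) (c) \<in> LL (1 + 1 + m + 1)" by (intro comm_LL LL1 hx) (use hm in simp_all)
  have g20: "b * (cm (cm (cm (a) (y)) (x)) (c)) \<in> T (m + 3)" by (rule T_mult_left, rule LL_T_ge[OF g20_l]) (use hm in simp_all)
  have g21_l: "cm (cm (cm (a) ((c * y))) (b)) (x) \<in> LL (1 + 1 + 1 + m)" by (intro comm_LL LL1 hx) (use hm in simp_all)
  have g21: "(cm (cm (cm (a) ((c * y))) (b)) (x)) \<in> T (m + 3)" by (rule LL_T_ge[OF g21_l]) (use hm in simp_all)
  have g22_l: "cm (cm (cm (b) (c)) (x)) (y) \<in> LL (1 + 1 + m + 1)" by (intro comm_LL LL1 hx) (use hm in simp_all)
  have g22: "a * (cm (cm (cm (b) (c)) (x)) (y)) \<in> T (m + 3)" by (rule T_mult_left, rule LL_T_ge[OF g22_l]) (use hm in simp_all)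
  have g23_l: "cm (cm (cm (a) (c)) (x)) (y) \<in> LL (1 + 1 + m + 1)" by (intro comm_LL LL1 hx) (use hm in simp_all)
  have g23: "b * (cm (cm (cm (a) (c)) (x)) (y)) \<in> T (m + 3)" by (rule T_mult_left, rule LL_T_ge[OF g23_l]) (use hm in simp_all)
  have g24_l: "cm (cm (cm (a) (y)) (b)) (x) \<in> LL (1 + 1 + 1 + m)" by (intro comm_LL LL1 hx) (use hm in simp_all)
  have g24: "c * (cm (cm (cm (a) (y)) (b)) (x)) \<in> T (m + 3)" by (rule T_mult_left, rule LL_T_ge[OF g24_l]) (use hm in simp_all)
  have g25_l: "cm (cm (cm (b) (y)) (x)) (c) \<in> LL (1 + 1 + m + 1)" by (intro comm_LL LL1 hx) (use hm in simp_all)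
  have g25: "(cm (cm (cm (b) (y)) (x)) (c)) * a \<in> T (m + 3)" by (rule T_mult_right, rule LL_T_ge[OF g25_l]) (use hm in simp_all)
  have g26_l: "cm (cm (cm (b) (y)) (c)) (x) \<in> LL (1 + 1 + 1 + m)" by (intro comm_LL LL1 hx) (use hm in simp_all)
  have g26: "a * (cm (cm (cm (b) (y)) (c)) (x)) \<in> T (m + 3)" by (rule T_mult_left, rule LL_T_ge[OF g26_l]) (use hm in simp_all)
  have g27_l: "cm (cm (cm (b) (x)) (y)) (c) \<in> LL (1 + m + 1 + 1)" by (intro comm_LL LL1 hx) (use hm in simp_all)
  have g27: "a * (cm (cm (cm (b) (x)) (y)) (c)) \<in> T (m + 3)" by (rule T_mult_left, rule LL_T_ge[OF g27_l]) (use hm in simp_all)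
  have g28_l: "cm (cm (cm (a) (x)) (y)) (c) \<in> LL (1 + m + 1 + 1)" by (intro comm_LL LL1 hx) (use hm in simp_all)
  have g28: "b * (cm (cm (cm (a) (x)) (y)) (c)) \<in> T (m + 3)" by (rule T_mult_left, rule LL_T_ge[OF g28_l]) (use hm in simp_all)
  have g29_l: "cm (cm (cm (a) (c)) ((b * y))) (x) \<in> LL (1 + 1 + 1 + m)" by (intro comm_LL LL1 hx) (use hm in simp_all)
  have g29: "(cm (cm (cm (a) (c)) ((b * y))) (x)) \<in> T (m + 3)" by (rule LL_T_ge[OF g29_l]) (use hm in simp_all)
  have g30_l: "cm (cm (cm (b) (x)) ((a * y))) (c) \<in> LL (1 + m + 1 + 1)" by (intro comm_LL LL1 hx) (use hm in simp_all)
  have g30: "(cm (cm (cm (b) (x)) ((a * y))) (c)) \<in> T (m + 3)" by (rule LL_T_ge[OF g30_l]) (use hm in simp_all)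
  have g31_l: "cm (cm (cm (a) (c)) (x)) (y) \<in> LL (1 + 1 + m + 1)" by (intro comm_LL LL1 hx) (use hm in simp_all)
  have g31: "(cm (cm (cm (a) (c)) (x)) (y)) * b \<in> T (m + 3)" by (rule T_mult_right, rule LL_T_ge[OF g31_l]) (use hm in simp_all)
  have g32_l: "cm (cm (cm (a) (x)) ((c * y))) (b) \<in> LL (1 + m + 1 + 1)" by (intro comm_LL LL1 hx) (use hm in simp_all)
  have g32: "(cm (cm (cm (a) (x)) ((c * y))) (b)) \<in> T (m + 3)" by (rule LL_T_ge[OF g32_l]) (use hm in simp_all)
  have g33_l: "cm (cm (cm (a) (y)) (x)) (b) \<in> LL (1 + 1 + m + 1)" by (intro comm_LL LL1 hx) (use hm in simp_all)
  have g33: "c * (cm (cm (cm (a) (y)) (x)) (b)) \<in> T (m + 3)" by (rule T_mult_left, rule LL_T_ge[OF g33_l]) (use hm in simp_all)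
  have g34_l: "cm (cm (cm (a) (x)) (y)) (b) \<in> LL (1 + m + 1 + 1)" by (intro comm_LL LL1 hx) (use hm in simp_all)
  have g34: "(cm (cm (cm (a) (x)) (y)) (b)) * c \<in> T (m + 3)" by (rule T_mult_right, rule LL_T_ge[OF g34_l]) (use hm in simp_all)
  have g35_l: "cm (cm (cm (a) ((b * y))) (c)) (x) \<in> LL (1 + 1 + 1 + m)" by (intro comm_LL LL1 hx) (use hm in simp_all)
  have g35: "(cm (cm (cm (a) ((b * y))) (c)) (x)) \<in> T (m + 3)" by (rule LL_T_ge[OF g35_l]) (use hm in simp_all)
  have g36_l: "cm (cm (cm (a) (b)) (c)) (x) \<in> LL (1 + 1 + 1 + m)" by (intro comm_LL LL1 hx) (use hm in simp_all)
  have g36: "y * (cm (cm (cm (a) (b)) (c)) (x)) \<in> T (m + 3)" by (rule T_mult_left, rule LL_T_ge[OF g36_l]) (use hm in simp_all)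
  have g37_l: "cm (cm (cm (a) (x)) (c)) (y) \<in> LL (1 + m + 1 + 1)" by (intro comm_LL LL1 hx) (use hm in simp_all)
  have g37: "b * (cm (cm (cm (a) (x)) (c)) (y)) \<in> T (m + 3)" by (rule T_mult_left, rule LL_T_ge[OF g37_l]) (use hm in simp_all)
  have g38_l: "cm (cm (cm (a) ((c * y))) (x)) (b) \<in> LL (1 + 1 + m + 1)" by (intro comm_LL LL1 hx) (use hm in simp_all)
  have g38: "(cm (cm (cm (a) ((c * y))) (x)) (b)) \<in> T (m + 3)" by (rule LL_T_ge[OF g38_l]) (use hm in simp_all)
  have g39_l: "cm (cm (cm (a) (b)) (x)) (c) \<in> LL (1 + 1 + m + 1)" by (intro comm_LL LL1 hx) (use hm in simp_all)
  have g39: "(cm (cm (cm (a) (b)) (x)) (c)) * y \<in> T (m + 3)" by (rule T_mult_right, rule LL_T_ge[OF g39_l]) (use hm in simp_all)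
  have g40_l: "cm (cm (cm (a) ((b * y))) (x)) (c) \<in> LL (1 + 1 + m + 1)" by (intro comm_LL LL1 hx) (use hm in simp_all)
  have g40: "(cm (cm (cm (a) ((b * y))) (x)) (c)) \<in> T (m + 3)" by (rule LL_T_ge[OF g40_l]) (use hm in simp_all)
  have g41_l: "cm (cm (cm (a) (x)) (b)) (c) \<in> LL (1 + m + 1 + 1)" by (intro comm_LL LL1 hx) (use hm in simp_all)
  have g41: "y * (cm (cm (cm (a) (x)) (b)) (c)) \<in> T (m + 3)" by (rule T_mult_left, rule LL_T_ge[OF g41_l]) (use hm in simp_all)
  have g42_l: "cm (cm (cm (a) (y)) (x)) (b) \<in> LL (1 + 1 + m + 1)" by (intro comm_LL LL1 hx) (use hm in simp_all)
  have g42: "(cm (cm (cm (a) (y)) (x)) (b)) * c \<in> T (m + 3)" by (rule T_mult_right, rule LL_T_ge[OF g42_l]) (use hm in simp_all)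
  have g43_l: "cm (cm (cm (a) (y)) (x)) (c) \<in> LL (1 + 1 + m + 1)" by (intro comm_LL LL1 hx) (use hm in simp_all)
  have g43: "(cm (cm (cm (a) (y)) (x)) (c)) * b \<in> T (m + 3)" by (rule T_mult_right, rule LL_T_ge[OF g43_l]) (use hm in simp_all)
  have g44_l: "cm (cm (cm (a) (b)) ((c * y))) (x) \<in> LL (1 + 1 + 1 + m)" by (intro comm_LL LL1 hx) (use hm in simp_all)
  have g44: "(cm (cm (cm (a) (b)) ((c * y))) (x)) \<in> T (m + 3)" by (rule LL_T_ge[OF g44_l]) (use hm in simp_all)
  have g45_l: "cm (cm (cm (b) (c)) (y)) (x) \<in> LL (1 + 1 + 1 + m)" by (intro comm_LL LL1 hx) (use hm in simp_all)
  have g45: "a * (cm (cm (cm (b) (c)) (y)) (x)) \<in> T (m + 3)" by (rule T_mult_left, rule LL_T_ge[OF g45_l]) (use hm in simp_all)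
  have g46_l: "cm (cm (cm (a) (x)) (y)) (c) \<in> LL (1 + m + 1 + 1)" by (intro comm_LL LL1 hx) (use hm in simp_all)
  have g46: "(cm (cm (cm (a) (x)) (y)) (c)) * b \<in> T (m + 3)" by (rule T_mult_right, rule LL_T_ge[OF g46_l]) (use hm in simp_all)
  have g47_l: "cm (cm (cm (b) (c)) (x)) (y) \<in> LL (1 + 1 + m + 1)" by (intro comm_LL LL1 hx) (use hm in simp_all)
  have g47: "(cm (cm (cm (b) (c)) (x)) (y)) * a \<in> T (m + 3)" by (rule T_mult_right, rule LL_T_ge[OF g47_l]) (use hm in simp_all)
  have g48_l: "cm (cm (cm (a) (x)) (c)) (b) \<in> LL (1 + m + 1 + 1)" by (intro comm_LL LL1 hx) (use hm in simp_all)
  have g48: "y * (cm (cm (cm (a) (x)) (c)) (b)) \<in> T (m + 3)" by (rule T_mult_left, rule LL_T_ge[OF g48_l]) (use hm in simp_all)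
  have g49_l: "cm (cm (cm (a) (x)) (b)) (y) \<in> LL (1 + m + 1 + 1)" by (intro comm_LL LL1 hx) (use hm in simp_all)
  have g49: "c * (cm (cm (cm (a) (x)) (b)) (y)) \<in> T (m + 3)" by (rule T_mult_left, rule LL_T_ge[OF g49_l]) (use hm in simp_all)
  have g50_l: "cm (cm (cm (a) (c)) (x)) (b) \<in> LL (1 + 1 + m + 1)" by (intro comm_LL LL1 hx) (use hm in simp_all)
  have g50: "y * (cm (cm (cm (a) (c)) (x)) (b)) \<in> T (m + 3)" by (rule T_mult_left, rule LL_T_ge[OF g50_l]) (use hm in simp_all)
  have g51_l: "cm (cm (cm (a) (x)) ((b * y))) (c) \<in> LL (1 + m + 1 + 1)" by (intro comm_LL LL1 hx) (use hm in simp_all)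
  have g51: "(cm (cm (cm (a) (x)) ((b * y))) (c)) \<in> T (m + 3)" by (rule LL_T_ge[OF g51_l]) (use hm in simp_all)
  have g52_l: "cm (cm (cm (b) ((a * y))) (c)) (x) \<in> LL (1 + 1 + 1 + m)" by (intro comm_LL LL1 hx) (use hm in simp_all)
  have g52: "(cm (cm (cm (b) ((a * y))) (c)) (x)) \<in> T (m + 3)" by (rule LL_T_ge[OF g52_l]) (use hm in simp_all)
  have g53_l: "cm (cm (cm (b) (y)) (x)) (c) \<in> LL (1 + 1 + m + 1)" by (intro comm_LL LL1 hx) (use hm in simp_all)
  have g53: "a * (cm (cm (cm (b) (y)) (x)) (c)) \<in> T (m + 3)" by (rule T_mult_left, rule LL_T_ge[OF g53_l]) (use hm in simp_all)
  have g54_l: "cm (cm (cm (a) (b)) (y)) (x) \<in> LL (1 + 1 + 1 + m)" by (intro comm_LL LL1 hx) (use hm in simp_all)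
  have g54: "c * (cm (cm (cm (a) (b)) (y)) (x)) \<in> T (m + 3)" by (rule T_mult_left, rule LL_T_ge[OF g54_l]) (use hm in simp_all)
  have "(cm (cm a b) c * cm x y) + (cm (cm a b) c * cm x y) + (cm (cm a b) c * cm x y) \<in> T (m + 3)" unfolding p3id by (intro T_add T_diff T_neg g0 g1 g2 g3 g4 g5 g6 g7 g8 g9 g10 g11 g12 g13 g14 g15 g16 g17 g18 g19 g20 g21 g22 g23 g24 g25 g26 g27 g28 g29 g30 g31 g32 g33 g34 g35 g36 g37 g38 g39 g40 g41 g42 g43 g44 g45 g46 g47 g48 g49 g50 g51 g52 g53 g54)
  then show ?thesis by (rule third)
qed

lemma P3full: assumes hP: "P \<in> LL 3" and hd: "d \<in> LL n" and hn: "1 \<le> n"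
  shows "P * d \<in> T (n + 2)"
proof (cases "n = 1")
  case True
  have "P \<in> T 3" using LL_T[OF hP] by simp
  then have h3: "P * d \<in> T 3" by (rule T_mult_right)
  have e: "n + 2 = 3" using True by simp
  show ?thesis unfolding e by (rule h3)
next
  case False
  then have n2: "2 \<le> n" using hn by simp
  show ?thesis
  proof (rule lin_left[OF _ hP])
    fix xs :: "'a list" assume "length xs = 3"
    then obtain a b c where xs: "xs = [a, b, c]" using len3 by blast
    show "lcomm xs * d \<in> T (n + 2)" unfolding xs lcomm3
    proof (rule lin_right[OF _ hd])
      fix ys :: "'a list" assume ly: "length ys = n"
      have "length ys = Suc (n - 1)" "1 \<le> n - 1" using ly n2 by auto
      then obtain ys' y where ys: "lcomm ys = cm (lcomm ys') y" and l': "length ys' = n - 1"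
        using lcomm_last by blast
      have x: "lcomm ys' \<in> LL (n - 1)" using LL.gen[OF l'] .
      have "cm (cm a b) c * cm (lcomm ys') y \<in> T (n - 1 + 3)" by (rule P3[OF x]) (use n2 in simp)
      moreover have "n - 1 + 3 = n + 2" using n2 by simp
      ultimately show "cm (cm a b) c * lcomm ys \<in> T (n + 2)" unfolding ys by simp
    qed
  qed
qed

lemma P3full_rev: assumes hP: "P \<in> LL 3" and hd: "d \<in> LL n" and hn: "1 \<le> n"
  shows "d * P \<in> T (n + 2)"
proof -
  have e: "d * P = P * d - cm P d" by (simp add: cm_def)
  have "cm P d \<in> LL (3 + n)" by (rule comm_LL[OF hP hd]) (use hn in simp_all)
  then have "cm P d \<in> T (n + 2)" by (rule LL_T_ge) simp_all
  then show ?thesis unfolding e by (rule T_diff[OF P3full[OF hP hd hn]])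
qed


lemma csid: "cm (cm (x * c) u) v = ((cm (cm (x) (c)) (u)) * v) + ((cm (cm (x) (u)) (v)) * c) - ((cm (cm (u) (c)) (v)) * x) + (u * (cm (cm (x) (v)) (c))) - (v * (cm (cm (x) (c)) (u))) - ((cm (cm (x) ((u * v))) (c))) + (v * (cm (cm (x) (u)) (c)))"
  unfolding cm_def by (simp add: algebra_simps)

lemma cstar_gen: assumes hc: "c \<in> LL j" and hj: "1 \<le> j" shows "cm (cm (x * c) u) v \<in> T (j + 2)"
proof -
  have g0_l: "cm (cm (x) (c)) (u) \<in> LL (1 + j + 1)" by (intro comm_LL LL1 hc) (use hj in simp_all)
  have g0: "(cm (cm (x) (c)) (u)) * v \<in> T (j + 2)" by (rule T_mult_right, rule LL_T_ge[OF g0_l]) (use hj in simp_all)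
  have g1_l0: "cm (cm (x) (u)) (v) \<in> LL (1 + 1 + 1)" by (intro comm_LL LL1) simp_all
  have g1_l: "cm (cm (x) (u)) (v) \<in> LL 3" using g1_l0 by (simp add: numeral_3_eq_3)
  have g1: "(cm (cm (x) (u)) (v)) * c \<in> T (j + 2)" by (rule P3full[OF g1_l hc hj])
  have g2_l: "cm (cm (u) (c)) (v) \<in> LL (1 + j + 1)" by (intro comm_LL LL1 hc) (use hj in simp_all)
  have g2: "(cm (cm (u) (c)) (v)) * x \<in> T (j + 2)" by (rule T_mult_right, rule LL_T_ge[OF g2_l]) (use hj in simp_all)
  have g3_l: "cm (cm (x) (v)) (c) \<in> LL (1 + 1 + j)" by (intro comm_LL LL1 hc) (use hj in simp_all)
  have g3: "u * (cm (cm (x) (v)) (c)) \<in> T (j + 2)" by (rule T_mult_left, rule LL_T_ge[OF g3_l]) (use hj in simp_all)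
  have g4_l: "cm (cm (x) (c)) (u) \<in> LL (1 + j + 1)" by (intro comm_LL LL1 hc) (use hj in simp_all)
  have g4: "v * (cm (cm (x) (c)) (u)) \<in> T (j + 2)" by (rule T_mult_left, rule LL_T_ge[OF g4_l]) (use hj in simp_all)
  have g5_l: "cm (cm (x) ((u * v))) (c) \<in> LL (1 + 1 + j)" by (intro comm_LL LL1 hc) (use hj in simp_all)
  have g5: "(cm (cm (x) ((u * v))) (c)) \<in> T (j + 2)" by (rule LL_T_ge[OF g5_l]) (use hj in simp_all)
  have g6_l: "cm (cm (x) (u)) (c) \<in> LL (1 + 1 + j)" by (intro comm_LL LL1 hc) (use hj in simp_all)
  have g6: "v * (cm (cm (x) (u)) (c)) \<in> T (j + 2)" by (rule T_mult_left, rule LL_T_ge[OF g6_l]) (use hj in simp_all)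
  show ?thesis unfolding csid by (intro T_add T_diff T_neg g0 g1 g2 g3 g4 g5 g6)
qed

lemma cstar: assumes z: "z \<in> T j" and hj: "1 \<le> j" shows "cm (cm z u) v \<in> T (j + 2)"
  using z hj
proof (induction rule: T_induct)
  case (g1 c)
  have "cm (cm c u) v \<in> LL (j + 1 + 1)" by (intro comm_LL LL1 g1) (use hj in simp_all)
  then show ?case by (rule LL_T_ge) simp_all
next
  case (g2 x c) then show ?case using cstar_gen hj by blast
next
  case (add a b)
  have e: "cm (cm (a + b) u) v = cm (cm a u) v + cm (cm b u) v" by (simp add: cm_def algebra_simps)
  show ?case unfolding e by (rule T_add[OF add(1) add(2)])
qed


lemma pkid: "cm (cm w b) c * cm x y = - ((cm (cm (cm (c) ((b * y))) (w)) (x))) - ((cm (cm (cm (b) (x)) (c)) (w)) * y) + (c * (cm (cm (cm (b) (y)) (w)) (x))) - ((cm (cm (cm (b) (w)) (c)) (x)) * y) + ((cm (cm (cm (c) (w)) ((b * y))) (x))) + ((cm (cm (cm (c) (x)) ((b * y))) (w))) - (c * (cm (cm (cm (b) (w)) (y)) (x))) - ((cm (cm (cm (b) (y)) (w)) (x)) * c) + ((cm (cm (cm (c) ((y * b))) (w)) (x))) + ((cm (cm (cm (b) (c)) (x)) (w)) * y) - ((cm (cm (cm (c) (w)) ((y * b))) (x))) - ((cm (cm (cm (c) (x)) (y)) (w)) * b) - (b * (cm (cm (cm (c) (x)) (w)) (y))) + ((cm (cm (cm (c) (x)) (w)) (y)) * b) + (w * (cm (cm (cm (x) (c)) (b)) (y)))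 - (cm (cm (w * cm x c) b) y) + ((cm (cm (cm (b) (w)) ((c * y))) (x)))"
  unfolding cm_def by (simp add: algebra_simps)

lemma PK_gen: assumes hw: "w \<in> LL k" and hk: "1 \<le> k" and hx: "x \<in> LL m" and hm: "1 \<le> m"
  and hP: "\<And>d n. d \<in> LL n \<Longrightarrow> 1 \<le> n \<Longrightarrow> w * d \<in> T (k + n - 1)"
  shows "cm (cm w b) c * cm x y \<in> T (k + m + 2)"
proof -
  have g0_l: "cm (cm (cm (c) ((b * y))) (w)) (x) \<in> LL (1 + 1 + k + m)" by (intro comm_LL LL1 hw hx) (use hk hm in simp_all)
  have g0: "(cm (cm (cm (c) ((b * y))) (w)) (x)) \<in> T (k + m + 2)" by (rule LL_T_ge[OF g0_l]) (use hk hm in simp_all)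
  have g1_l: "cm (cm (cm (b) (x)) (c)) (w) \<in> LL (1 + m + 1 + k)" by (intro comm_LL LL1 hw hx) (use hk hm in simp_all)
  have g1: "(cm (cm (cm (b) (x)) (c)) (w)) * y \<in> T (k + m + 2)" by (rule T_mult_right, rule LL_T_ge[OF g1_l]) (use hk hm in simp_all)
  have g2_l: "cm (cm (cm (b) (y)) (w)) (x) \<in> LL (1 + 1 + k + m)" by (intro comm_LL LL1 hw hx) (use hk hm in simp_all)
  have g2: "c * (cm (cm (cm (b) (y)) (w)) (x)) \<in> T (k + m + 2)" by (rule T_mult_left, rule LL_T_ge[OF g2_l]) (use hk hm in simp_all)
  have g3_l: "cm (cm (cm (b) (w)) (c)) (x) \<in> LL (1 + k + 1 + m)" by (intro comm_LL LL1 hw hx) (use hk hm in simp_all)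
  have g3: "(cm (cm (cm (b) (w)) (c)) (x)) * y \<in> T (k + m + 2)" by (rule T_mult_right, rule LL_T_ge[OF g3_l]) (use hk hm in simp_all)
  have g4_l: "cm (cm (cm (c) (w)) ((b * y))) (x) \<in> LL (1 + k + 1 + m)" by (intro comm_LL LL1 hw hx) (use hk hm in simp_all)
  have g4: "(cm (cm (cm (c) (w)) ((b * y))) (x)) \<in> T (k + m + 2)" by (rule LL_T_ge[OF g4_l]) (use hk hm in simp_all)
  have g5_l: "cm (cm (cm (c) (x)) ((b * y))) (w) \<in> LL (1 + m + 1 + k)" by (intro comm_LL LL1 hw hx) (use hk hm in simp_all)
  have g5: "(cm (cm (cm (c) (x)) ((b * y))) (w)) \<in> T (k + m + 2)" by (rule LL_T_ge[OF g5_l]) (use hk hm in simp_all)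
  have g6_l: "cm (cm (cm (b) (w)) (y)) (x) \<in> LL (1 + k + 1 + m)" by (intro comm_LL LL1 hw hx) (use hk hm in simp_all)
  have g6: "c * (cm (cm (cm (b) (w)) (y)) (x)) \<in> T (k + m + 2)" by (rule T_mult_left, rule LL_T_ge[OF g6_l]) (use hk hm in simp_all)
  have g7_l: "cm (cm (cm (b) (y)) (w)) (x) \<in> LL (1 + 1 + k + m)" by (intro comm_LL LL1 hw hx) (use hk hm in simp_all)
  have g7: "(cm (cm (cm (b) (y)) (w)) (x)) * c \<in> T (k + m + 2)" by (rule T_mult_right, rule LL_T_ge[OF g7_l]) (use hk hm in simp_all)
  have g8_l: "cm (cm (cm (c) ((y * b))) (w)) (x) \<in> LL (1 + 1 + k + m)" by (intro comm_LL LL1 hw hx) (use hk hm in simp_all)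
  have g8: "(cm (cm (cm (c) ((y * b))) (w)) (x)) \<in> T (k + m + 2)" by (rule LL_T_ge[OF g8_l]) (use hk hm in simp_all)
  have g9_l: "cm (cm (cm (b) (c)) (x)) (w) \<in> LL (1 + 1 + m + k)" by (intro comm_LL LL1 hw hx) (use hk hm in simp_all)
  have g9: "(cm (cm (cm (b) (c)) (x)) (w)) * y \<in> T (k + m + 2)" by (rule T_mult_right, rule LL_T_ge[OF g9_l]) (use hk hm in simp_all)
  have g10_l: "cm (cm (cm (c) (w)) ((y * b))) (x) \<in> LL (1 + k + 1 + m)" by (intro comm_LL LL1 hw hx) (use hk hm in simp_all)
  have g10: "(cm (cm (cm (c) (w)) ((y * b))) (x)) \<in> T (k + m + 2)" by (rule LL_T_ge[OF g10_l]) (use hk hm in simp_all)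
  have g11_l: "cm (cm (cm (c) (x)) (y)) (w) \<in> LL (1 + m + 1 + k)" by (intro comm_LL LL1 hw hx) (use hk hm in simp_all)
  have g11: "(cm (cm (cm (c) (x)) (y)) (w)) * b \<in> T (k + m + 2)" by (rule T_mult_right, rule LL_T_ge[OF g11_l]) (use hk hm in simp_all)
  have g12_l: "cm (cm (cm (c) (x)) (w)) (y) \<in> LL (1 + m + k + 1)" by (intro comm_LL LL1 hw hx) (use hk hm in simp_all)
  have g12: "b * (cm (cm (cm (c) (x)) (w)) (y)) \<in> T (k + m + 2)" by (rule T_mult_left, rule LL_T_ge[OF g12_l]) (use hk hm in simp_all)
  have g13_l: "cm (cm (cm (c) (x)) (w)) (y) \<in> LL (1 + m + k + 1)" by (intro comm_LL LL1 hw hx) (use hk hm in simp_all)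
  have g13: "(cm (cm (cm (c) (x)) (w)) (y)) * b \<in> T (k + m + 2)" by (rule T_mult_right, rule LL_T_ge[OF g13_l]) (use hk hm in simp_all)
  have g14_l: "cm (cm (cm (x) (c)) (b)) (y) \<in> LL (m + 1 + 1 + 1)" by (intro comm_LL LL1 hx) (use hm in simp_all)
  have g14_i: "w * (cm (cm (cm (x) (c)) (b)) (y)) \<in> T (k + (m + 1 + 1 + 1) - 1)" by (rule hP[OF g14_l]) (use hm in simp)
  have g14_e: "k + (m + 1 + 1 + 1) - 1 = k + m + 2" by simp
  have g14: "w * (cm (cm (cm (x) (c)) (b)) (y)) \<in> T (k + m + 2)" using g14_i unfolding g14_e .
  have g15_l: "cm x c \<in> LL (m + 1)" by (intro comm_LL LL1 hx) (use hm in simp_all)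
  have g15_z: "w * cm x c \<in> T (k + (m + 1) - 1)" by (rule hP[OF g15_l]) simp
  have g15_i: "cm (cm (w * cm x c) b) y \<in> T (k + (m + 1) - 1 + 2)" by (rule cstar[OF g15_z]) (use hk in simp)
  have g15_e: "k + (m + 1) - 1 + 2 = k + m + 2" by simp
  have g15: "cm (cm (w * cm x c) b) y \<in> T (k + m + 2)" using g15_i unfolding g15_e .
  have g16_l: "cm (cm (cm (b) (w)) ((c * y))) (x) \<in> LL (1 + k + 1 + m)" by (intro comm_LL LL1 hw hx) (use hk hm in simp_all)
  have g16: "(cm (cm (cm (b) (w)) ((c * y))) (x)) \<in> T (k + m + 2)" by (rule LL_T_ge[OF g16_l]) (use hk hm in simp_all)
  show ?thesis unfolding pkid by (intro T_add T_diff T_neg g0 g1 g2 g3 g4 g5 g6 g7 g8 g9 g10 g11 g12 g13 g14 g15 g16)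
qed

lemma odd_cases: "odd (k::nat) \<Longrightarrow> k = 1 \<or> k = 3 \<or> 5 \<le> k" by presburger

lemma split2: "length xs = k \<Longrightarrow> 3 \<le> k \<Longrightarrow> \<exists>ws b c. xs = ws @ [b, c] \<and> length ws = k - 2"
proof -
  assume l: "length xs = k" and k: "3 \<le> k"
  then have "xs \<noteq> []" by auto
  then obtain xs1 c where x1: "xs = xs1 @ [c]" using rev_exhaust by blast
  then have "xs1 \<noteq> []" using l k by auto
  then obtain ws b where x2: "xs1 = ws @ [b]" using rev_exhaust by blast
  have "xs = ws @ [b, c]" using x1 x2 by simp
  moreover have "length ws = k - 2" using l x1 x2 by simp
  ultimately show ?thesis by blast
qed

lemma lcomm_snoc2: "ws \<noteq> [] \<Longrightarrow> lcomm (ws @ [b, c]) = cm (cm (lcomm ws) b) c"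
proof -
  assume ne: "ws \<noteq> []"
  have e: "ws @ [b, c] = (ws @ [b]) @ [c]" by simp
  have ne2: "ws @ [b] \<noteq> []" by simp
  show ?thesis unfolding e lcomm_snoc[OF ne2] lcomm_snoc[OF ne] ..
qed

lemma Phi: "odd k \<Longrightarrow> c \<in> LL k \<Longrightarrow> d \<in> LL n \<Longrightarrow> 1 \<le> n \<Longrightarrow> c * d \<in> T (k + n - 1)"
proof (induction k arbitrary: c d n rule: less_induct)
  case (less k)
  have ok: "odd k" and hc: "c \<in> LL k" and hd: "d \<in> LL n" and hn: "1 \<le> n" using less.prems by auto
  consider "k = 1" | "k = 3" | "5 \<le> k" using odd_cases[OF ok] by blast
  then show ?case
  proof cases
    case 1
    have "d \<in> T n" using LL_T[OF hd hn] .
    then have "c * d \<in> T n" by (rule T_mult_left)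
    then show ?thesis using 1 by simp
  next
    case 2
    have "c * d \<in> T (n + 2)" using P3full[OF _ hd hn] hc 2 by simp
    then show ?thesis using 2 by (simp add: add.commute)
  next
    case 3
    show ?thesis
    proof (rule lin_left[OF _ hc])
      fix xs :: "'a list" assume lx: "length xs = k"
      obtain ws b c' where xs: "xs = ws @ [b, c']" and lw: "length ws = k - 2"
        using split2[OF lx] 3 by auto
      have wne: "ws \<noteq> []" using lw 3 by auto
      have ex: "lcomm xs = cm (cm (lcomm ws) b) c'" unfolding xs by (rule lcomm_snoc2[OF wne])
      have hw: "lcomm ws \<in> LL (k - 2)" using LL.gen[OF lw] .
      have hP: "\<And>d' n'. d' \<in> LL n' \<Longrightarrow> 1 \<le> n' \<Longrightarrow> lcomm ws * d' \<in> T (k - 2 + n' - 1)"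
      proof -
        fix d' n' assume "d' \<in> LL n'" "1 \<le> n'"
        moreover have "k - 2 < k" "odd (k - 2)" using 3 ok by auto
        ultimately show "lcomm ws * d' \<in> T (k - 2 + n' - 1)" using less.IH hw by blast
      qed
      show "lcomm xs * d \<in> T (k + n - 1)"
      proof (cases "n = 1")
        case True
        have "lcomm xs \<in> T k" using LL_T[OF LL.gen[OF lx]] 3 by simp
        then show ?thesis using True T_mult_right by simp
      next
        case False
        then have n2: "2 \<le> n" using hn by simp
        show ?thesis
        proof (rule lin_right[OF _ hd])
          fix ys :: "'a list" assume ly: "length ys = n"
          have "length ys = Suc (n - 1)" "1 \<le> n - 1" using ly n2 by auto
          then obtain ys' y where ys: "lcomm ys = cm (lcomm ys') y" and l': "length ys' = n - 1"
            using lcomm_last by blast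
          have x: "lcomm ys' \<in> LL (n - 1)" using LL.gen[OF l'] .
          have i: "cm (cm (lcomm ws) b) c' * cm (lcomm ys') y \<in> T (k - 2 + (n - 1) + 2)"
            by (rule PK_gen[OF hw _ x _ hP]) (use 3 n2 in simp_all)
          have e: "k - 2 + (n - 1) + 2 = k + n - 1" using 3 n2 by simp
          have i2: "cm (cm (lcomm ws) b) c' * cm (lcomm ys') y \<in> T (k + n - 1)" using i unfolding e .
          show "lcomm xs * lcomm ys \<in> T (k + n - 1)" unfolding ex ys by (rule i2)
        qed
      qed
    qed
  qed
qed

lemma Phi_T: assumes oa: "odd a" and hc: "c \<in> LL a" and z: "z \<in> T b" and hb: "1 \<le> b"
  shows "c * z \<in> T (a + b - 1)"
  using z hb
proof (induction rule: T_induct)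
  case (g1 d) then show ?case using Phi[OF oa hc _ hb] by blast
next
  case (g2 y d)
  have a1: "1 \<le> a" using oa by (cases a) auto
  have e: "c * (y * d) = y * (c * d) + cm c y * d" by (simp add: cm_def algebra_simps)
  have cy: "cm c y \<in> LL a" using LL_Suc[OF LL_right[OF hc a1] a1] .
  show ?case unfolding e
    by (rule T_add[OF T_mult_left[OF Phi[OF oa hc g2 hb]] Phi[OF oa cy g2 hb]])
next
  case (add u v)
  have e: "c * (u + v) = c * u + c * v" by (simp add: distrib_left)
  show ?case unfolding e by (rule T_add[OF add(1) add(2)])
qed

lemma T_prod: assumes oa: "odd a" and z1: "z1 \<in> T a" and z2: "z2 \<in> T b" and hb: "1 \<le> b"
  shows "z1 * z2 \<in> T (a + b - 1)"
proof -
  have a1: "1 \<le> a" using oa by (cases a) auto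
  show ?thesis using z1 a1
  proof (induction rule: T_induct)
    case (g1 c) then show ?case using Phi_T[OF oa _ z2 hb] by blast
  next
    case (g2 x c)
    have e: "x * c * z2 = x * (c * z2)" by (simp add: mult.assoc)
    show ?case unfolding e by (rule T_mult_left[OF Phi_T[OF oa g2 z2 hb]])
  next
    case (add u v)
    have e: "(u + v) * z2 = u * z2 + v * z2" by (simp add: distrib_right)
    show ?case unfolding e by (rule T_add[OF add(1) add(2)])
  qed
qed

lemma parity: "\<forall>m\<in>set ms. odd m \<and> 0 < m \<Longrightarrow> length ms \<le> sum_list ms \<and> even (sum_list ms - length ms)"
proof (induction ms)
  case Nil then show ?case by simp
next
  case (Cons m ms)
  have IH: "length ms \<le> sum_list ms" "even (sum_list ms - length ms)" using Cons by auto
  have om: "odd m" using Cons.prems by simp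
  obtain p where p: "m = 2 * p + 1" using om by (auto elim: oddE)
  from IH(2) obtain q where q: "sum_list ms - length ms = 2 * q" by (rule evenE)
  have s: "sum_list ms = length ms + 2 * q" using IH(1) q by simp
  have "m + sum_list ms - Suc (length ms) = 2 * (p + q)" using p s by simp
  then show ?case using p s by simp
qed

lemma chain: "ms \<noteq> [] \<Longrightarrow> length xs = length ms \<Longrightarrow> (\<forall>i<length ms. xs ! i \<in> T (ms ! i))
  \<Longrightarrow> (\<forall>m\<in>set ms. odd m \<and> 0 < m) \<Longrightarrow> lprod xs \<in> T (sum_list ms - length ms + 1)"
proof (induction ms arbitrary: xs rule: rev_induct)
  case Nil then show ?case by simp
next
  case (snoc m ms)
  from snoc.prems(2) have "xs \<noteq> []" by auto
  then obtain xs' z where xs: "xs = xs' @ [z]" using rev_exhaust by blast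
  have lx: "length xs' = length ms" using snoc.prems(2) xs by simp
  have "xs ! length ms \<in> T ((ms @ [m]) ! length ms)" using spec[OF snoc.prems(3), of "length ms"] by simp
  then have z: "z \<in> T m" using xs lx by (simp add: nth_append)
  have om: "odd m" "0 < m" using snoc.prems(4) by auto
  show ?case
  proof (cases "ms = []")
    case True
    then have "xs' = []" using lx by simp
    then show ?thesis using z xs True om(2) by (simp add: Suc_pred)
  next
    case False
    have pr: "\<forall>i<length ms. xs' ! i \<in> T (ms ! i)"
    proof (intro allI impI)
      fix i assume i: "i < length ms"
      then have "xs ! i \<in> T ((ms @ [m]) ! i)" using spec[OF snoc.prems(3), of i] by simp
      then show "xs' ! i \<in> T (ms ! i)" using i xs lx by (simp add: nth_append)
    qed
    have pm: "\<forall>m\<in>set ms. odd m \<and> 0 < m" using snoc.prems(4) by simp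
    have IH: "lprod xs' \<in> T (sum_list ms - length ms + 1)" by (rule snoc.IH[OF False lx pr pm])
    have par: "length ms \<le> sum_list ms" "even (sum_list ms - length ms)"
      using parity[OF pm] by auto
    have odN: "odd (sum_list ms - length ms + 1)" using par by simp
    have "lprod xs' * z \<in> T (sum_list ms - length ms + 1 + m - 1)"
      by (rule T_prod[OF odN IH z]) (use om in simp)
    moreover have "xs' \<noteq> []" using lx False by auto
    then have "lprod xs = lprod xs' * z" unfolding xs by (rule lprod_snoc)
    moreover have "sum_list ms - length ms + 1 + m - 1 = sum_list (ms @ [m]) - length (ms @ [m]) + 1"
      using par om by simp
    ultimately show ?thesis by simp
  qed
qed

end

theorem proposition1p3:
  fixes smult :: "'r::comm_ring_1 \<Rightarrow> 'a::ring \<Rightarrow> 'a"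
    and ms :: "nat list"
  assumes alg: "is_algebra smult"
    and sixth: "\<exists>u::'r. 6 * u = 1"
    and k_pos: "length ms > 0"
    and odd_pos: "\<forall>m \<in> set ms. odd m \<and> m > 0"
  shows "set_product smult (map (Tn smult) ms)
           \<subseteq> Tn smult (sum_list ms - length ms + 1)"
proof -
  interpret A: algctx smult by (rule algctx.intro[OF alg sixth])
  have ne: "ms \<noteq> []" using k_pos by auto
  have sub: "{lprod xs | xs. length xs = length (map (Tn smult) ms) \<and>
      (\<forall>i<length (map (Tn smult) ms). xs ! i \<in> map (Tn smult) ms ! i)}
      \<subseteq> Tn smult (sum_list ms - length ms + 1)"
  proof
    fix u :: 'a assume "u \<in> {lprod xs | xs. length xs = length (map (Tn smult) ms) \<and>
      (\<forall>i<length (map (Tn smult) ms). xs ! i \<in> map (Tn smult) ms ! i)}"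
    then obtain xs where u: "u = lprod xs" and l: "length xs = length ms"
      and h: "\<forall>i<length ms. xs ! i \<in> Tn smult (ms ! i)" by auto
    show "u \<in> Tn smult (sum_list ms - length ms + 1)"
      unfolding u by (rule A.chain[OF ne l h odd_pos])
  qed
  have sm: "submod smult (Tn smult (sum_list ms - length ms + 1))"
    using A.T_ideal unfolding alg_ideal_def submod_def by blast
  show ?thesis unfolding set_product_def using sub sm by blast
qed

end
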